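(* Let $w\ge 2$, $h\ge 3$, $1\le m<w$, and $G=P_w(U)\sqcap C_h$ where $U=\{1,2,\dots,m\}$ or $U=\{w-m+1,\dots,w\}$. (1) If $h\le 2m$, then $Z(G)\le h$. (2) If $2m<h<4m$, then $Z(G)\le 2m$. (3) If $h>4m$, then $Z(G)\le\lceil h/2\rceil$.
   Context: All graphs are finite, simple and undirected. Zero forcing: given a graph $G$ and a set $S\subseteq V(G)$ of initially filled vertices, the color change rule says that if a filled vertex $v$ has exactly one unfilled neighbor $u$, then $v$ forces $u$ to become filled. $S$ is a zero forcing set if repeatedly applying this rule eventually fills every vertex of $G$. The zero forcing number $Z(G)$ is the minimum cardinality of a zero forcing set of $G$. The path $P_n$ has vertex set $\{1,\dots,n\}$ and edges $\{k,k+1\}$ for $1\le k\le n-1$; the cycle $C_n$ ($n\ge3$) has vertex set $\{1,\dots,n\}$ and edges $\{k,k+1\}$ for $1\le k\le n-1$ together with $\{n,1\}$. Generalized hierarchical product: for graphs $W,H$ and $U\subseteq V(W)$ (the root set), $W(U)\sqcap H$ is the graph with vertex set $V(W)\times V(H)$ in which $(x_1,y_1)$ and $(x_2,y_2)$ are adjacent iff either ($x_1=x_2\in U$ and $y_1y_2\in E(H)$) or ($y_1=y_2$ and $x_1x_2\in E(W)$). *)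

theory Defs
  imports Complex_Main
begin

text \<open>A finite simple graph is given by a vertex set V and a symmetric,
irreflexive adjacency predicate adj (only its restriction to V matters).\<close>

definition nbrs :: "'a set \<Rightarrow> ('a \<Rightarrow> 'a \<Rightarrow> bool) \<Rightarrow> 'a \<Rightarrow> 'a set" where
  "nbrs V adj v = {u \<in> V. adj v u}"

definition force_step :: "'a set \<Rightarrow> ('a \<Rightarrow> 'a \<Rightarrow> bool) \<Rightarrow> 'a set \<Rightarrow> 'a set \<Rightarrow> bool" where
  "force_step V adj S S' \<longleftrightarrow>
     (\<exists>v\<in>S. \<exists>u. nbrs V adj v - S = {u} \<and> S' = insert u S)"

definition zero_forcing_set :: "'a set \<Rightarrow> ('a \<Rightarrow> 'a \<Rightarrow> bool) \<Rightarrow> 'a set \<Rightarrow> bool" where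
  "zero_forcing_set V adj S \<longleftrightarrow> S \<subseteq> V \<and> (force_step V adj)\<^sup>*\<^sup>* S V"

definition zero_forcing_number :: "'a set \<Rightarrow> ('a \<Rightarrow> 'a \<Rightarrow> bool) \<Rightarrow> nat" where
  "zero_forcing_number V adj = (LEAST k. \<exists>S. zero_forcing_set V adj S \<and> card S = k)"

text \<open>Path P_n on {1..n} and cycle C_n on {1..n}.\<close>
definition path_adj :: "nat \<Rightarrow> nat \<Rightarrow> bool" where
  "path_adj x y \<longleftrightarrow> y = x + 1 \<or> x = y + 1"

definition cycle_adj :: "nat \<Rightarrow> nat \<Rightarrow> nat \<Rightarrow> bool" where
  "cycle_adj n x y \<longleftrightarrow> y = x + 1 \<or> x = y + 1 \<or> (x = n \<and> y = 1) \<or> (x = 1 \<and> y = n)"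

definition hprod_verts :: "'a set \<Rightarrow> 'b set \<Rightarrow> ('a \<times> 'b) set" where
  "hprod_verts VW VH = VW \<times> VH"

definition hprod_adj :: "('a \<Rightarrow> 'a \<Rightarrow> bool) \<Rightarrow> 'a set \<Rightarrow> ('b \<Rightarrow> 'b \<Rightarrow> bool)
    \<Rightarrow> ('a \<times> 'b) \<Rightarrow> ('a \<times> 'b) \<Rightarrow> bool" where
  "hprod_adj adjW U adjH p q \<longleftrightarrow>
     (fst p = fst q \<and> fst p \<in> U \<and> adjH (snd p) (snd q)) \<or>
     (snd p = snd q \<and> adjW (fst p) (fst q))"

end

theory Submission
  imports Defs
begin


definition ZFT :: "'a set \<Rightarrow> ('a \<Rightarrow> 'a \<Rightarrow> bool) \<Rightarrow> 'a set \<Rightarrow> ('a \<Rightarrow> nat) \<Rightarrow> bool" where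
  "ZFT V adj S t \<longleftrightarrow> (\<forall>u\<in>V - S. \<exists>v\<in>V. adj v u \<and> t v < t u \<and>
      (\<forall>z\<in>V. adj v z \<longrightarrow> z \<noteq> u \<longrightarrow> t z < t u))"

lemma reach_insert:
  assumes r: "(force_step V adj)\<^sup>*\<^sup>* S T" and vT: "v \<in> T" and uV: "u \<in> V"
    and avu: "adj v u" and sub: "nbrs V adj v \<subseteq> insert u T"
  shows "(force_step V adj)\<^sup>*\<^sup>* S (insert u T)"
proof (cases "u \<in> T")
  case True then show ?thesis using r by (simp add: insert_absorb)
next
  case False
  have "nbrs V adj v - T = {u}" using sub False uV avu by (auto simp: nbrs_def)
  then have "force_step V adj T (insert u T)" using vT by (auto simp: force_step_def)
  with r show ?thesis by (rule rtranclp.rtrancl_into_rtrancl)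
qed

lemma ZFT_zfs:
  assumes fin: "finite V" and SV: "S \<subseteq> V" and Z: "ZFT V adj S t"
  shows "zero_forcing_set V adj S"
proof -
  have lvl: "(force_step V adj)\<^sup>*\<^sup>* S (S \<union> {u\<in>V. t u < k})" for k
  proof (induction k)
    case 0 then show ?case by simp
  next
    case (Suc k)
    have "finite {u\<in>V. t u = k}" using fin by simp
    have fin_step: "F \<subseteq> {u\<in>V. t u = k} \<Longrightarrow> (force_step V adj)\<^sup>*\<^sup>* S (S \<union> {u\<in>V. t u < k} \<union> F)"
      if "finite F" for F using that
    proof (induction F rule: finite_induct)
      case empty then show ?case using Suc.IH by simp
    next
      case (insert u F)
      let ?T = "S \<union> {u\<in>V. t u < k} \<union> F"
      have IH: "(force_step V adj)\<^sup>*\<^sup>* S ?T" using insert by simp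
      have uV: "u \<in> V" and tu: "t u = k" using insert.prems by auto
      show ?case
      proof (cases "u \<in> S")
        case True
        then have eq: "S \<union> {u\<in>V. t u < k} \<union> insert u F = ?T" by blast
        show ?thesis unfolding eq by (rule IH)
      next
        case False
        then obtain v where vV: "v \<in> V" and avu: "adj v u" and tv: "t v < t u"
          and nz: "\<forall>z\<in>V. adj v z \<longrightarrow> z \<noteq> u \<longrightarrow> t z < t u"
          using Z uV unfolding ZFT_def by blast
        have "v \<in> ?T" using vV tv tu by simp
        moreover have "nbrs V adj v \<subseteq> insert u ?T" using nz tu by (auto simp: nbrs_def)
        ultimately have "(force_step V adj)\<^sup>*\<^sup>* S (insert u ?T)"
          using reach_insert[OF IH _ uV avu] by blast
        moreover have eq: "S \<union> {u\<in>V. t u < k} \<union> insert u F = insert u ?T" by auto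
        ultimately show ?thesis unfolding eq by simp
      qed
    qed
    have "(force_step V adj)\<^sup>*\<^sup>* S (S \<union> {u\<in>V. t u < k} \<union> {u\<in>V. t u = k})"
      using fin_step[OF \<open>finite {u\<in>V. t u = k}\<close>] by simp
    moreover have eq: "S \<union> {u\<in>V. t u < Suc k} = S \<union> {u\<in>V. t u < k} \<union> {u\<in>V. t u = k}" by auto
    ultimately show ?case unfolding eq by simp
  qed
  define K where "K = Suc (Max (t ` V))"
  have "\<forall>u\<in>V. t u < K"
  proof
    fix u assume "u \<in> V"
    then have "t u \<le> Max (t ` V)" using fin by (intro Max_ge) auto
    then show "t u < K" unfolding K_def by simp
  qed
  then have "S \<union> {u\<in>V. t u < K} = V" using SV by auto
  then show ?thesis using lvl[of K] SV by (simp add: zero_forcing_set_def)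
qed

lemma zfn_le:
  assumes "zero_forcing_set V adj S"
  shows "zero_forcing_number V adj \<le> card S"
  unfolding zero_forcing_number_def using assms by (intro Least_le) blast

lemma ZFT_transfer:
  assumes gV: "\<And>p. p \<in> V \<Longrightarrow> g p \<in> V" and gg: "\<And>p. p \<in> V \<Longrightarrow> g (g p) = p"
    and ad: "\<And>p q. p \<in> V \<Longrightarrow> q \<in> V \<Longrightarrow> adj' (g p) (g q) = adj p q"
    and Z: "ZFT V adj S t" and SV: "S \<subseteq> V"
  shows "ZFT V adj' (g ` S) (t \<circ> g)"
  unfolding ZFT_def
proof
  fix u assume u: "u \<in> V - g ` S"
  have guV: "g u \<in> V" using u gV by auto
  have "g u \<notin> S" using u gg by (metis DiffE image_eqI)
  then obtain v where vV: "v \<in> V" and avu: "adj v (g u)" and tv: "t v < t (g u)"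
    and nz: "\<forall>z\<in>V. adj v z \<longrightarrow> z \<noteq> g u \<longrightarrow> t z < t (g u)"
    using Z guV unfolding ZFT_def by blast
  show "\<exists>v\<in>V. adj' v u \<and> (t \<circ> g) v < (t \<circ> g) u \<and> (\<forall>z\<in>V. adj' v z \<longrightarrow> z \<noteq> u \<longrightarrow> (t \<circ> g) z < (t \<circ> g) u)"
  proof (intro bexI conjI ballI impI)
    show "g v \<in> V" using vV gV by auto
    show "adj' (g v) u" using ad[OF vV guV] gg u avu by auto
    show "(t \<circ> g) (g v) < (t \<circ> g) u" using gg vV tv by simp
    fix z assume zV: "z \<in> V" and a: "adj' (g v) z" and zu: "z \<noteq> u"
    have "adj v (g z)" using ad[OF vV gV[OF zV]] gg[OF zV] a by simp
    moreover have "g z \<noteq> g u" using zu gg zV u by (metis DiffE)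
    ultimately show "(t \<circ> g) z < (t \<circ> g) u" using nz gV[OF zV] by simp
  qed
qed



locale grid =
  fixes w h m j :: nat
  assumes m1: "1 \<le> m" and mw: "m < w" and hP: "2*m+2*j < h" and hP2: "h \<le> 4*m+2*j"
begin

definition VV :: "(nat \<times> nat) set" where "VV = {1..w} \<times> {1..h}"
definition adjL where "adjL = hprod_adj path_adj {1..m} (cycle_adj h)"
definition RR :: "nat \<Rightarrow> bool" where "RR y \<longleftrightarrow> y \<le> 2*m \<or> (y \<le> 2*m+2*j \<and> even y)"

definition tt :: "nat \<Rightarrow> nat \<Rightarrow> nat" where
"tt x y = (if m < x then
    (if y \<le> 2*m then w - x else if y \<le> 2*m+2*j then (if even y then w - x else w+3*m+2*j+x) else w+3*m+2*j+x)
  else if y \<le> m then (if m+1 \<le> x+y then w - x else w+m-y)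
  else if y \<le> 2*m then (if y \<le> m+x then w - x else w+y-m-1)
  else if y \<le> 2*m+2*j then (if x = m then (if even y then w-m else w-m+y-1) else w-m+y-1)
  else if y - (2*m+2*j) \<le> h+1-y then (if x + (y-(2*m+2*j)) \<le> m+1 then w+m+2*j+(y-(2*m+2*j))-1 else w+2*m+2*j+x)
  else (if x + (h+1-y) \<le> m+1 then w+m+2*j+(h+1-y)-1 else w+2*m+2*j+x))"

definition tp :: "nat \<times> nat \<Rightarrow> nat" where "tp p = tt (fst p) (snd p)"

lemma adj_iff: "adjL (a,b) (c,d) \<longleftrightarrow>
   (c = a \<and> 1 \<le> a \<and> a \<le> m \<and> (d = b+1 \<or> b = d+1 \<or> (b = h \<and> d = 1) \<or> (b = 1 \<and> d = h))) \<or>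
   (d = b \<and> (c = a+1 \<or> a = c+1))"
  unfolding adjL_def hprod_adj_def path_adj_def cycle_adj_def by auto

lemma nbrE:
  assumes "adjL (a,b) (c,d)"
  obtains (R) "c = a+1" "d = b" | (L) "a = c+1" "d = b" | (U) "c = a" "a \<le> m" "d = b+1"
   | (D) "c = a" "a \<le> m" "b = d+1" | (W1) "c = a" "a \<le> m" "b = h" "d = 1"
   | (W2) "c = a" "a \<le> m" "b = 1" "d = h"
  using assms unfolding adj_iff by blast

definition ok :: "nat \<times> nat \<Rightarrow> nat \<times> nat \<Rightarrow> bool" where
 "ok u v \<longleftrightarrow> v \<in> VV \<and> adjL v u \<and> tp v < tp u \<and> (\<forall>z\<in>VV. adjL v z \<longrightarrow> z \<noteq> u \<longrightarrow> tp z < tp u)"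

lemma ok_intro:
  assumes "(a,b) \<in> VV" "adjL (a,b) (x,y)" "tt a b < tt x y"
   and "\<And>c d. 1 \<le> c \<Longrightarrow> c \<le> w \<Longrightarrow> 1 \<le> d \<Longrightarrow> d \<le> h \<Longrightarrow> adjL (a,b) (c,d) \<Longrightarrow> (c,d) \<noteq> (x,y) \<Longrightarrow> tt c d < tt x y"
  shows "ok (x,y) (a,b)"
  using assms unfolding ok_def tp_def VV_def by auto

lemma vA: "m \<le> c \<Longrightarrow> 1 \<le> d \<Longrightarrow> d \<le> 2*m \<or> (d \<le> 2*m+2*j \<and> even d) \<Longrightarrow> tt c d = w - c"
  unfolding tt_def by auto

lemma vW: "1 \<le> d \<Longrightarrow> d \<le> 2*m \<Longrightarrow> m+1 \<le> c+d \<Longrightarrow> d \<le> m+c \<Longrightarrow> tt c d = w - c"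
  unfolding tt_def by auto

lemma vC1: "c + d \<le> m \<Longrightarrow> tt c d = w+m-d"
  unfolding tt_def by auto

lemma vC2: "c \<le> m \<Longrightarrow> d \<le> 2*m \<Longrightarrow> m + c < d \<Longrightarrow> tt c d = w+d-m-1"
  unfolding tt_def by auto

lemma bCC: "1 \<le> c \<Longrightarrow> c \<le> m \<Longrightarrow> 1 \<le> d \<Longrightarrow> d \<le> 2*m \<Longrightarrow> tt c d \<le> w + (if d \<le> m then m - d else d - m - 1)"
  unfolding tt_def by auto

lemma b12: "1 \<le> c \<Longrightarrow> 1 \<le> d \<Longrightarrow> d \<le> 2*m \<Longrightarrow> tt c d \<le> w + m - 1"
  using m1 mw unfolding tt_def by auto

lemma vD: "c \<le> m \<Longrightarrow> 2*m < d \<Longrightarrow> d \<le> 2*m+2*j \<Longrightarrow> \<not> (c = m \<and> even d) \<Longrightarrow> tt c d = w-m+d-1"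
  unfolding tt_def by auto

lemma bLD: "1 \<le> c \<Longrightarrow> c \<le> m \<Longrightarrow> 1 \<le> d \<Longrightarrow> d \<le> 2*m+2*j \<Longrightarrow> tt c d \<le> w + m + (d - 2*m) - 1"
  using m1 mw unfolding tt_def by auto

lemma bLU: "1 \<le> c \<Longrightarrow> c \<le> m \<Longrightarrow> 1 \<le> d \<Longrightarrow> d - (2*m+2*j) \<le> h+1-d \<Longrightarrow> c + (d - (2*m+2*j)) \<le> m+1
   \<Longrightarrow> tt c d + 1 \<le> w + m + 2*j + (d - (2*m+2*j))"
  using m1 mw hP unfolding tt_def by auto

lemma vE1: "c \<le> m \<Longrightarrow> 2*m+2*j < d \<Longrightarrow> d - (2*m+2*j) \<le> h+1-d \<Longrightarrow> c + (d - (2*m+2*j)) \<le> m+1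
   \<Longrightarrow> tt c d = w + m + 2*j + (d - (2*m+2*j)) - 1"
  unfolding tt_def by auto

lemma vE2: "c \<le> m \<Longrightarrow> 2*m+2*j < d \<Longrightarrow> h+1-d < d - (2*m+2*j) \<Longrightarrow> c + (h+1-d) \<le> m+1
   \<Longrightarrow> tt c d = w + m + 2*j + (h+1-d) - 1"
  unfolding tt_def by auto

lemma vF: "c \<le> m \<Longrightarrow> 2*m+2*j < d \<Longrightarrow> m+1 < c + (if d - (2*m+2*j) \<le> h+1-d then d - (2*m+2*j) else h+1-d)
   \<Longrightarrow> tt c d = w + 2*m + 2*j + c"
  unfolding tt_def by (auto split: if_splits)

lemma bALL: "1 \<le> c \<Longrightarrow> c \<le> m \<Longrightarrow> 1 \<le> d \<Longrightarrow> tt c d \<le> w + 2*m + 2*j + c"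
  using m1 mw unfolding tt_def by auto

lemma vG: "m < c \<Longrightarrow> \<not> (d \<le> 2*m \<or> (d \<le> 2*m+2*j \<and> even d)) \<Longrightarrow> tt c d = w + 3*m + 2*j + c"
  unfolding tt_def by auto


abbreviation "PP \<equiv> 2*m+2*j"

lemma r1:
  assumes "1 \<le> y" "y \<le> h" "m \<le> x" "x < w" "y \<le> 2*m \<or> (y \<le> 2*m+2*j \<and> even y)"
  shows "ok (x,y) (x+1,y)"
proof (rule ok_intro)
  show "(x+1,y) \<in> VV" using assms unfolding VV_def by auto
  show "adjL (x+1,y) (x,y)" by (simp add: adj_iff)
  have tu: "tt x y = w - x" by (rule vA) (use assms in auto)
  have "tt (x+1) y = w - (x+1)" by (rule vA) (use assms in auto)
  then show "tt (x+1) y < tt x y" using tu assms by arith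
  fix c d assume c: "1 \<le> c" "c \<le> w" "1 \<le> d" "d \<le> h" and a: "adjL (x+1,y) (c,d)" and ne: "(c,d) \<noteq> (x,y)"
  from a show "tt c d < tt x y"
  proof (cases rule: nbrE)
    case R
    have "tt c d = w - c" by (rule vA) (use assms R in auto)
    then show ?thesis using R tu c assms by arith
  next
    case L then show ?thesis using ne by auto
  qed (use assms in auto)
qed

lemma r2:
  assumes "1 \<le> x" "x < m" "y \<le> 2*m" "m+1 \<le> x+y" "y \<le> m+x"
  shows "ok (x,y) (x+1,y)"
proof (rule ok_intro)
  show "(x+1,y) \<in> VV" using assms mw hP unfolding VV_def by auto
  show "adjL (x+1,y) (x,y)" by (simp add: adj_iff)
  have tu: "tt x y = w - x" by (rule vW) (use assms in auto)
  have "tt (x+1) y = w - (x+1)" by (rule vW) (use assms in auto)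
  then show "tt (x+1) y < tt x y" using tu assms mw by arith
  fix c d assume c: "1 \<le> c" "c \<le> w" "1 \<le> d" "d \<le> h" and a: "adjL (x+1,y) (c,d)" and ne: "(c,d) \<noteq> (x,y)"
  from a show "tt c d < tt x y"
  proof (cases rule: nbrE)
    case R
    have "tt c d = w - c" by (rule vW) (use assms R in auto)
    then show ?thesis using R tu c assms mw by arith
  next
    case L then show ?thesis using ne by auto
  next
    case U
    have "tt c d = w - c" by (rule vW) (use assms U in auto)
    then show ?thesis using U tu c assms mw by arith
  next
    case D
    have "tt c d = w - c" by (rule vW) (use assms D in auto)
    then show ?thesis using D tu c assms mw by arith
  next
    case W1 then show ?thesis using assms hP by auto
  next
    case W2 then show ?thesis using assms by auto
  qed
qed

lemma r3a:
  assumes "1 \<le> x" "x < m" "1 \<le> y" "x+y \<le> m"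
  shows "ok (x,y) (x,y+1)"
proof (rule ok_intro)
  show "(x,y+1) \<in> VV" using assms mw hP unfolding VV_def by auto
  show "adjL (x,y+1) (x,y)" using assms by (simp add: adj_iff)
  have tu: "tt x y = w + m - y" by (rule vC1) (use assms in auto)
  have "tt x (y+1) \<le> w + (if y+1 \<le> m then m - (y+1) else (y+1) - m - 1)" by (rule bCC) (use assms in auto)
  then show "tt x (y+1) < tt x y" using tu assms by (auto split: if_splits)
  fix c d assume c: "1 \<le> c" "c \<le> w" "1 \<le> d" "d \<le> h" and a: "adjL (x,y+1) (c,d)" and ne: "(c,d) \<noteq> (x,y)"
  from a show "tt c d < tt x y"
  proof (cases rule: nbrE)
    case R
    have "tt c d \<le> w + (if d \<le> m then m - d else d - m - 1)" by (rule bCC) (use assms R c in auto)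
    then show ?thesis using R tu assms by (auto split: if_splits)
  next
    case L
    have "tt c d \<le> w + (if d \<le> m then m - d else d - m - 1)" by (rule bCC) (use assms L c in auto)
    then show ?thesis using L tu assms by (auto split: if_splits)
  next
    case U
    have "tt c d \<le> w + (if d \<le> m then m - d else d - m - 1)" by (rule bCC) (use assms U c in auto)
    then show ?thesis using U tu assms by (auto split: if_splits)
  next
    case D then show ?thesis using ne by auto
  next
    case W1 then show ?thesis using assms hP by auto
  next
    case W2 then show ?thesis using assms by auto
  qed
qed

lemma r3b:
  assumes "1 \<le> x" "x < m" "y \<le> 2*m" "m+x < y"
  shows "ok (x,y) (x,y-1)"
proof (rule ok_intro)
  show "(x,y-1) \<in> VV" using assms mw hP unfolding VV_def by auto
  show "adjL (x,y-1) (x,y)" using assms by (auto simp add: adj_iff)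
  have tu: "tt x y = w + y - m - 1" by (rule vC2) (use assms in auto)
  have "tt x (y-1) \<le> w + (if y-1 \<le> m then m - (y-1) else (y-1) - m - 1)" by (rule bCC) (use assms in auto)
  then show "tt x (y-1) < tt x y" using tu assms by (auto split: if_splits)
  fix c d assume c: "1 \<le> c" "c \<le> w" "1 \<le> d" "d \<le> h" and a: "adjL (x,y-1) (c,d)" and ne: "(c,d) \<noteq> (x,y)"
  from a show "tt c d < tt x y"
  proof (cases rule: nbrE)
    case R
    have "tt c d \<le> w + (if d \<le> m then m - d else d - m - 1)" by (rule bCC) (use assms R c in auto)
    then show ?thesis using R tu assms by (auto split: if_splits)
  next
    case L
    have "tt c d \<le> w + (if d \<le> m then m - d else d - m - 1)" by (rule bCC) (use assms L c in auto)
    then show ?thesis using L tu assms by (auto split: if_splits)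
  next
    case U then show ?thesis using ne assms by auto
  next
    case D
    have "tt c d \<le> w + (if d \<le> m then m - d else d - m - 1)" by (rule bCC) (use assms D c in auto)
    then show ?thesis using D tu assms by (auto split: if_splits)
  next
    case W1 then show ?thesis using assms hP by auto
  next
    case W2 then show ?thesis using assms by auto
  qed
qed


lemma r4o:
  assumes "1 \<le> x" "x \<le> m" "y = 2*m+2*i+1" "i < j"
  shows "ok (x,y) (x,y-1)"
proof (rule ok_intro)
  show "(x,y-1) \<in> VV" using assms mw hP unfolding VV_def by auto
  show "adjL (x,y-1) (x,y)" using assms by (auto simp add: adj_iff)
  have tu: "tt x y = w - m + y - 1" by (rule vD) (use assms in auto)
  have "tt x (y-1) \<le> w + m + ((y-1) - 2*m) - 1" by (rule bLD) (use assms in auto)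
  then show "tt x (y-1) < tt x y" using tu assms mw by arith
  fix c d assume c: "1 \<le> c" "c \<le> w" "1 \<le> d" "d \<le> h" and a: "adjL (x,y-1) (c,d)" and ne: "(c,d) \<noteq> (x,y)"
  from a show "tt c d < tt x y"
  proof (cases rule: nbrE)
    case R
    show ?thesis
    proof (cases "x = m")
      case True
      have "tt c d = w - c" by (rule vA) (use assms R True in auto)
      then show ?thesis using R tu c assms mw by arith
    next
      case False
      have "tt c d \<le> w + m + (d - 2*m) - 1" by (rule bLD) (use assms R c False in auto)
      then show ?thesis using R tu assms mw by arith
    qed
  next
    case L
    have "tt c d \<le> w + m + (d - 2*m) - 1" by (rule bLD) (use assms L c in auto)
    then show ?thesis using L tu assms mw by arith
  next
    case U then show ?thesis using ne assms by auto
  next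
    case D
    have "tt c d \<le> w + m + (d - 2*m) - 1" by (rule bLD) (use assms D c in auto)
    then show ?thesis using D tu assms mw by arith
  next
    case W1 then show ?thesis using assms hP by auto
  next
    case W2 then show ?thesis using assms m1 by auto
  qed
qed

lemma r4e:
  assumes "1 \<le> x" "x < m" "y = 2*m+2*i+2" "i < j"
  shows "ok (x,y) (x,y-1)"
proof (rule ok_intro)
  show "(x,y-1) \<in> VV" using assms mw hP unfolding VV_def by auto
  show "adjL (x,y-1) (x,y)" using assms by (auto simp add: adj_iff)
  have tu: "tt x y = w - m + y - 1" by (rule vD) (use assms in auto)
  have "tt x (y-1) \<le> w + m + ((y-1) - 2*m) - 1" by (rule bLD) (use assms in auto)
  then show "tt x (y-1) < tt x y" using tu assms mw by arith
  fix c d assume c: "1 \<le> c" "c \<le> w" "1 \<le> d" "d \<le> h" and a: "adjL (x,y-1) (c,d)" and ne: "(c,d) \<noteq> (x,y)"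
  from a show "tt c d < tt x y"
  proof (cases rule: nbrE)
    case R
    have "tt c d \<le> w + m + (d - 2*m) - 1" by (rule bLD) (use assms R c in auto)
    then show ?thesis using R tu assms mw by arith
  next
    case L
    have "tt c d \<le> w + m + (d - 2*m) - 1" by (rule bLD) (use assms L c in auto)
    then show ?thesis using L tu assms mw by arith
  next
    case U then show ?thesis using ne assms by auto
  next
    case D
    have "tt c d \<le> w + m + (d - 2*m) - 1" by (rule bLD) (use assms D c in auto)
    then show ?thesis using D tu assms mw by arith
  next
    case W1 then show ?thesis using assms hP by auto
  next
    case W2 then show ?thesis using assms m1 by auto
  qed
qed

lemma r5a:
  assumes "1 \<le> x" "x \<le> m" "2*m+2*j < y" "y \<le> h" "y - (2*m+2*j) \<le> h+1-y" "x + (y - (2*m+2*j)) \<le> m+1"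
  shows "ok (x,y) (x,y-1)"
proof (rule ok_intro)
  show "(x,y-1) \<in> VV" using assms mw hP unfolding VV_def by auto
  show "adjL (x,y-1) (x,y)" using assms by (auto simp add: adj_iff)
  have tu: "tt x y = w + m + 2*j + (y - (2*m+2*j)) - 1" by (rule vE1) (use assms in auto)
  have "tt x (y-1) + 1 \<le> w + m + 2*j + ((y-1) - (2*m+2*j))" by (rule bLU) (use assms in auto)
  then show "tt x (y-1) < tt x y" using tu assms mw by arith
  fix c d assume c: "1 \<le> c" "c \<le> w" "1 \<le> d" "d \<le> h" and a: "adjL (x,y-1) (c,d)" and ne: "(c,d) \<noteq> (x,y)"
  from a show "tt c d < tt x y"
  proof (cases rule: nbrE)
    case R
    show ?thesis
    proof (cases "x = m")
      case True
      have yv: "y = 2*m+2*j+1" using assms True by arith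
      have "d = 2*m+2*j" using R yv by simp
      then have "tt c d = w - c" by (intro vA) (use assms R True in auto)
      then show ?thesis using R tu c assms mw by arith
    next
      case False
      have "tt c d + 1 \<le> w + m + 2*j + (d - (2*m+2*j))" by (rule bLU) (use assms R c False in auto)
      then show ?thesis using R tu assms mw by arith
    qed
  next
    case L
    have "tt c d + 1 \<le> w + m + 2*j + (d - (2*m+2*j))" by (rule bLU) (use assms L c in auto)
    then show ?thesis using L tu assms mw by arith
  next
    case U then show ?thesis using ne assms by auto
  next
    case D
    have "tt c d + 1 \<le> w + m + 2*j + (d - (2*m+2*j))" by (rule bLU) (use assms D c in auto)
    then show ?thesis using D tu assms mw by arith
  next
    case W1 then show ?thesis using assms hP by auto
  next
    case W2 then show ?thesis using assms m1 by auto
  qed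
qed

lemma r5b:
  assumes "1 \<le> x" "x \<le> m" "2*m+2*j < y" "y < h" "h+1-y < y - (2*m+2*j)" "x + (h+1-y) \<le> m+1"
  shows "ok (x,y) (x,y+1)"
proof (rule ok_intro)
  show "(x,y+1) \<in> VV" using assms mw hP unfolding VV_def by auto
  show "adjL (x,y+1) (x,y)" using assms by (auto simp add: adj_iff)
  have tu: "tt x y = w + m + 2*j + (h+1-y) - 1" by (rule vE2) (use assms in auto)
  have "tt x (y+1) = w + m + 2*j + (h+1-(y+1)) - 1" by (rule vE2) (use assms in auto)
  then show "tt x (y+1) < tt x y" using tu assms mw by arith
  fix c d assume c: "1 \<le> c" "c \<le> w" "1 \<le> d" "d \<le> h" and a: "adjL (x,y+1) (c,d)" and ne: "(c,d) \<noteq> (x,y)"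
  from a show "tt c d < tt x y"
  proof (cases rule: nbrE)
    case R
    have "tt c d = w + m + 2*j + (h+1-d) - 1" by (rule vE2) (use assms R in auto)
    then show ?thesis using R tu assms mw by arith
  next
    case L
    have "tt c d = w + m + 2*j + (h+1-d) - 1" by (rule vE2) (use assms L in auto)
    then show ?thesis using L tu assms mw by arith
  next
    case U
    have "tt c d = w + m + 2*j + (h+1-d) - 1" by (rule vE2) (use assms U c in auto)
    then show ?thesis using U tu assms mw by arith
  next
    case D then show ?thesis using ne assms by auto
  next
    case W1
    have "tt c d \<le> w + m - 1" by (rule b12) (use assms W1 c m1 in auto)
    then show ?thesis using W1 tu assms mw by arith
  next
    case W2 then show ?thesis using assms m1 by auto
  qed
qed

lemma r5c:
  assumes "1 \<le> x" "x \<le> m" "y = h" "2*m+2*j+1 < h"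
  shows "ok (x,y) (x,1)"
proof (rule ok_intro)
  show "(x,1) \<in> VV" using assms mw hP unfolding VV_def by auto
  show "adjL (x,1) (x,y)" using assms by (auto simp add: adj_iff)
  have tu: "tt x y = w + m + 2*j + (h+1-y) - 1" by (rule vE2) (use assms in auto)
  have "tt x 1 \<le> w + m - 1" by (rule b12) (use assms m1 in auto)
  then show "tt x 1 < tt x y" using tu assms mw by arith
  fix c d assume c: "1 \<le> c" "c \<le> w" "1 \<le> d" "d \<le> h" and a: "adjL (x,1) (c,d)" and ne: "(c,d) \<noteq> (x,y)"
  from a show "tt c d < tt x y"
  proof (cases rule: nbrE)
    case R
    have "tt c d \<le> w + m - 1" by (rule b12) (use assms R c m1 in auto)
    then show ?thesis using R tu assms mw by arith
  next
    case L
    have "tt c d \<le> w + m - 1" by (rule b12) (use assms L c m1 in auto)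
    then show ?thesis using L tu assms mw by arith
  next
    case U
    have "tt c d \<le> w + m - 1" by (rule b12) (use assms U c m1 in auto)
    then show ?thesis using U tu assms mw by arith
  next
    case D then show ?thesis using c by auto
  next
    case W1 then show ?thesis using assms hP by auto
  next
    case W2 then show ?thesis using assms ne by auto
  qed
qed

lemma r6:
  assumes "1 \<le> x" "x \<le> m" "2*m+2*j < y" "y \<le> h"
    "m+1 < x + (if y - (2*m+2*j) \<le> h+1-y then y - (2*m+2*j) else h+1-y)"
  shows "ok (x,y) (x-1,y)"
proof -
  have x2: "2 \<le> x" using assms hP2 by (auto split: if_splits)
  show ?thesis
  proof (rule ok_intro)
    show "(x-1,y) \<in> VV" using assms x2 mw hP unfolding VV_def by auto
    show "adjL (x-1,y) (x,y)" using assms x2 by (auto simp add: adj_iff)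
    have tu: "tt x y = w + 2*m + 2*j + x" by (rule vF) (use assms in auto)
    have "tt (x-1) y \<le> w + 2*m + 2*j + (x-1)" by (rule bALL) (use assms x2 in auto)
    then show "tt (x-1) y < tt x y" using tu x2 by arith
    fix c d assume c: "1 \<le> c" "c \<le> w" "1 \<le> d" "d \<le> h" and a: "adjL (x-1,y) (c,d)" and ne: "(c,d) \<noteq> (x,y)"
    from a show "tt c d < tt x y"
    proof (cases rule: nbrE)
      case R then show ?thesis using ne x2 by auto
    next
      case L
      have "tt c d \<le> w + 2*m + 2*j + c" by (rule bALL) (use assms L c in auto)
      then show ?thesis using L tu x2 by arith
    next
      case U
      have "tt c d \<le> w + 2*m + 2*j + c" by (rule bALL) (use assms U c in auto)
      then show ?thesis using U tu x2 by arith
    next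
      case D
      have "tt c d \<le> w + 2*m + 2*j + c" by (rule bALL) (use assms D c in auto)
      then show ?thesis using D tu x2 by arith
    next
      case W1
      have "tt c d \<le> w + 2*m + 2*j + c" by (rule bALL) (use assms W1 c in auto)
      then show ?thesis using W1 tu x2 by arith
    next
      case W2
      have "tt c d \<le> w + 2*m + 2*j + c" by (rule bALL) (use assms W2 c in auto)
      then show ?thesis using W2 tu x2 by arith
    qed
  qed
qed

lemma r7:
  assumes "1 \<le> y" "y \<le> h" "m < x" "x \<le> w" "\<not> (y \<le> 2*m \<or> (y \<le> 2*m+2*j \<and> even y))"
  shows "ok (x,y) (x-1,y)"
proof (rule ok_intro)
  show "(x-1,y) \<in> VV" using assms m1 unfolding VV_def by auto
  show "adjL (x-1,y) (x,y)" using assms m1 by (auto simp add: adj_iff)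
  have tu: "tt x y = w + 3*m + 2*j + x" by (rule vG) (use assms in auto)
  have bnd: "tt c d < tt x y" if "1 \<le> c" "c < x" "1 \<le> d" "d \<le> h" "c \<le> m \<or> d = y" for c d
  proof (cases "c \<le> m")
    case True
    have "tt c d \<le> w + 2*m + 2*j + c" by (rule bALL) (use that True in auto)
    then show ?thesis using tu True assms by arith
  next
    case False
    have "d = y" using that False by auto
    then have "tt c d = w + 3*m + 2*j + c" by (intro vG) (use assms that False in auto)
    then show ?thesis using tu that by arith
  qed
  show "tt (x-1) y < tt x y" by (rule bnd) (use assms m1 in auto)
  fix c d assume c: "1 \<le> c" "c \<le> w" "1 \<le> d" "d \<le> h" and a: "adjL (x-1,y) (c,d)" and ne: "(c,d) \<noteq> (x,y)"
  from a show "tt c d < tt x y"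
  proof (cases rule: nbrE)
    case R then show ?thesis using ne assms by auto
  qed (use c assms bnd in auto)
qed


lemma band:
  assumes "1 \<le> x" "x \<le> m" "2*m+2*j < y" "y \<le> h"
  shows "\<exists>v. ok (x,y) v"
proof (cases "y - (2*m+2*j) \<le> h+1-y")
  case True
  show ?thesis
  proof (cases "x + (y - (2*m+2*j)) \<le> m+1")
    case True2: True
    show ?thesis using r5a[OF assms True True2] by blast
  next
    case False
    have "m+1 < x + (if y - (2*m+2*j) \<le> h+1-y then y - (2*m+2*j) else h+1-y)" using True False by simp
    then show ?thesis using r6[OF assms] by blast
  qed
next
  case False
  show ?thesis
  proof (cases "x + (h+1-y) \<le> m+1")
    case True2: True
    show ?thesis
    proof (cases "y < h")
      case True
      have "h+1-y < y - (2*m+2*j)" using False by simp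
      then show ?thesis using r5b[OF assms(1,2,3) True _ True2] by blast
    next
      case False3: False
      then have "y = h" using assms by simp
      moreover have "2*m+2*j+1 < h" using False \<open>y = h\<close> by simp
      ultimately show ?thesis using r5c[OF assms(1,2)] by blast
    qed
  next
    case False2: False
    have "m+1 < x + (if y - (2*m+2*j) \<le> h+1-y then y - (2*m+2*j) else h+1-y)" using False False2 by simp
    then show ?thesis using r6[OF assms] by blast
  qed
qed

lemma oddform:
  assumes "odd y" "2*m < y" "y \<le> 2*m+2*j"
  obtains i where "y = 2*m+2*i+1" "i < j"
proof -
  obtain k where k: "y = 2*k+1" using assms(1) oddE by blast
  have "m \<le> k" using assms(2) k by simp
  then have "y = 2*m+2*(k-m)+1" "k - m < j" using k assms by auto
  then show ?thesis using that by blast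
qed

lemma evenform:
  assumes "even y" "2*m < y" "y \<le> 2*m+2*j"
  obtains i where "y = 2*m+2*i+2" "i < j"
proof -
  obtain k where k: "y = 2*k" using assms(1) evenE by blast
  have "m < k" using assms(2) k by simp
  then have "y = 2*m+2*(k-m-1)+2" "k - m - 1 < j" using k assms by auto
  then show ?thesis using that by blast
qed

lemma cover:
  assumes "1 \<le> x" "x \<le> w" "1 \<le> y" "y \<le> h" "\<not> (x = w \<and> RR y)"
  shows "\<exists>v. ok (x,y) v"
proof -
  consider "m < x" | "x = m" | "x < m" by linarith
  then show ?thesis
  proof cases
    case 1
    show ?thesis
    proof (cases "RR y")
      case True
      then have "x < w" using assms by auto
      then show ?thesis using r1[of y x] assms 1 True unfolding RR_def by auto
    next
      case False
      then show ?thesis using r7[of y x] assms 1 unfolding RR_def by auto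
    qed
  next
    case 2
    show ?thesis
    proof (cases "RR y")
      case True
      then show ?thesis using r1[of y x] assms 2 mw unfolding RR_def by auto
    next
      case False
      show ?thesis
      proof (cases "y \<le> 2*m+2*j")
        case True
        then have "odd y" "2*m < y" using False unfolding RR_def by auto
        then obtain i where "y = 2*m+2*i+1" "i < j" using oddform True by blast
        then show ?thesis using r4o[of x y i] assms 2 by auto
      next
        case False2: False
        then show ?thesis using band[of x y] assms 2 by auto
      qed
    qed
  next
    case 3
    consider "y \<le> m" | "m < y" "y \<le> 2*m" | "2*m < y" "y \<le> 2*m+2*j" | "2*m+2*j < y" by linarith
    then show ?thesis
    proof cases
      case 1
      then show ?thesis using r3a[of x y] r2[of x y] assms 3 by (cases "x + y \<le> m") auto
    next
      case 2
      then show ?thesis using r3b[of x y] r2[of x y] assms 3 by (cases "y \<le> m + x") auto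
    next
      case c3: 3
      show ?thesis
      proof (cases "even y")
        case True
        then obtain i where "y = 2*m+2*i+2" "i < j" using evenform c3 by blast
        then show ?thesis using r4e[of x y i] assms 3 by auto
      next
        case False
        then obtain i where "y = 2*m+2*i+1" "i < j" using oddform c3 by blast
        then show ?thesis using r4o[of x y i] assms 3 by auto
      qed
    next
      case 4
      then show ?thesis using band[of x y] assms 3 by auto
    qed
  qed
qed

definition SS :: "(nat \<times> nat) set" where "SS = (\<lambda>y. (w,y)) ` {y\<in>{1..h}. RR y}"

lemma ZFT_SS: "ZFT VV adjL SS tp"
  unfolding ZFT_def
proof
  fix u assume u: "u \<in> VV - SS"
  obtain x y where xy: "u = (x,y)" by fastforce
  have "1 \<le> x" "x \<le> w" "1 \<le> y" "y \<le> h" using u xy unfolding VV_def by auto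
  moreover have "\<not> (x = w \<and> RR y)" using u xy \<open>1 \<le> y\<close> \<open>y \<le> h\<close> unfolding SS_def by auto
  ultimately obtain v where "ok (x,y) v" using cover by blast
  then show "\<exists>v\<in>VV. adjL v u \<and> tp v < tp u \<and> (\<forall>z\<in>VV. adjL v z \<longrightarrow> z \<noteq> u \<longrightarrow> tp z < tp u)"
    unfolding ok_def xy by blast
qed

lemma SS_sub: "SS \<subseteq> VV" unfolding SS_def VV_def using mw by auto

lemma card_SS: "card SS = 2*m + j"
proof -
  have inj: "inj_on (\<lambda>y. (w,y)) A" for A :: "nat set" by (auto simp: inj_on_def)
  have eq: "{y\<in>{1..h}. RR y} = {1..2*m} \<union> (\<lambda>i. 2*m+2*i) ` {1..j}"
  proof (intro equalityI subsetI)
    fix y assume "y \<in> {y\<in>{1..h}. RR y}"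
    then have y: "1 \<le> y" "RR y" by auto
    show "y \<in> {1..2*m} \<union> (\<lambda>i. 2*m+2*i) ` {1..j}"
    proof (cases "y \<le> 2*m")
      case True then show ?thesis using y by auto
    next
      case False
      then have "even y" "y \<le> 2*m+2*j" using y unfolding RR_def by auto
      then obtain i where "y = 2*m+2*i+2" "i < j" using evenform False by (metis not_le)
      then have "y = 2*m+2*(i+1)" "i+1 \<in> {1..j}" by auto
      then show ?thesis by blast
    qed
  next
    fix y assume "y \<in> {1..2*m} \<union> (\<lambda>i. 2*m+2*i) ` {1..j}"
    then show "y \<in> {y\<in>{1..h}. RR y}" using hP unfolding RR_def by auto
  qed
  have "card ({1..2*m} \<union> (\<lambda>i. 2*m+2*i) ` {1..j}) = card {1..2*m} + card ((\<lambda>i. 2*m+2*i) ` {1..j})"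
    by (rule card_Un_disjoint) auto
  also have "card ((\<lambda>i. 2*m+2*i) ` {1..j}) = j" by (subst card_image) (auto simp: inj_on_def)
  finally have "card {y\<in>{1..h}. RR y} = 2*m + j" using eq by simp
  then show ?thesis unfolding SS_def by (simp add: card_image[OF inj])
qed

lemma zfs_SS: "zero_forcing_set VV adjL SS"
  by (rule ZFT_zfs[OF _ SS_sub ZFT_SS]) (simp add: VV_def)

end


lemma col_ZFT:
  "ZFT ({1..w}\<times>{1..h}) (hprod_adj path_adj U (cycle_adj h)) ((\<lambda>y. (w,y)) ` {1..h}) (\<lambda>p. w - fst p)"
  unfolding ZFT_def
proof
  fix u assume u: "u \<in> {1..w}\<times>{1..h} - (\<lambda>y. (w,y)) ` {1..h}"
  obtain x y where xy: "u = (x,y)" by fastforce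
  have x: "1 \<le> x" "x < w" "1 \<le> y" "y \<le> h" using u xy by auto
  show "\<exists>v\<in>{1..w}\<times>{1..h}. hprod_adj path_adj U (cycle_adj h) v u \<and> w - fst v < w - fst u \<and>
      (\<forall>z\<in>{1..w}\<times>{1..h}. hprod_adj path_adj U (cycle_adj h) v z \<longrightarrow> z \<noteq> u \<longrightarrow> w - fst z < w - fst u)"
  proof (intro bexI[of _ "(x+1,y)"] conjI ballI impI)
    show "(x+1,y) \<in> {1..w}\<times>{1..h}" using x by auto
    show "hprod_adj path_adj U (cycle_adj h) (x+1,y) u" using xy by (simp add: hprod_adj_def path_adj_def)
    show "w - fst (x+1,y) < w - fst u" using xy x by simp
    fix z assume zV: "z \<in> {1..w}\<times>{1..h}" and a: "hprod_adj path_adj U (cycle_adj h) (x+1,y) z" and ne: "z \<noteq> u"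
    obtain c d where z: "z = (c,d)" by fastforce
    from a have "c = x+1 \<or> (d = y \<and> (c = x+2 \<or> x = c))" unfolding z hprod_adj_def path_adj_def by auto
    then have "c = x+1 \<or> c = x+2" using ne z xy by auto
    then show "w - fst z < w - fst u" using xy x z by auto
  qed
qed

lemma col_bound:
  assumes "1 \<le> w"
  shows "zero_forcing_number (hprod_verts {1..w} {1..h}) (hprod_adj path_adj U (cycle_adj h)) \<le> h"
proof -
  have "zero_forcing_set ({1..w}\<times>{1..h}) (hprod_adj path_adj U (cycle_adj h)) ((\<lambda>y. (w,y)) ` {1..h})"
    by (rule ZFT_zfs[OF _ _ col_ZFT]) (use assms in auto)
  then have "zero_forcing_number ({1..w}\<times>{1..h}) (hprod_adj path_adj U (cycle_adj h)) \<le> card ((\<lambda>y. (w,y)) ` {1..h})"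
    by (rule zfn_le)
  also have "card ((\<lambda>y. (w,y)) ` {1..h}) = h" by (subst card_image) (auto simp: inj_on_def)
  finally show ?thesis by (simp add: hprod_verts_def)
qed

lemma grid_bound:
  assumes g: "grid w h m j" and U: "U = {1..m} \<or> U = {w - m + 1..w}"
  shows "zero_forcing_number (hprod_verts {1..w} {1..h}) (hprod_adj path_adj U (cycle_adj h)) \<le> 2*m + j"
proof -
  interpret grid w h m j by (rule g)
  have zl: "zero_forcing_number VV adjL \<le> 2*m+j" using zfn_le[OF zfs_SS] card_SS by simp
  from U show ?thesis
  proof
    assume "U = {1..m}"
    then show ?thesis using zl unfolding VV_def adjL_def hprod_verts_def by simp
  next
    assume UR: "U = {w - m + 1..w}"
    define g where "g = (\<lambda>p::nat\<times>nat. (w + 1 - fst p, snd p))"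
    have gV: "g p \<in> VV" if "p \<in> VV" for p using that unfolding g_def VV_def by auto
    have gg: "g (g p) = p" if "p \<in> VV" for p using that unfolding g_def VV_def by auto
    have ad: "hprod_adj path_adj U (cycle_adj h) (g p) (g q) = adjL p q" if "p \<in> VV" "q \<in> VV" for p q
    proof -
      obtain a b where p: "p = (a,b)" by fastforce
      obtain c d where q: "q = (c,d)" by fastforce
      have ab: "1 \<le> a" "a \<le> w" "1 \<le> c" "c \<le> w" using that p q unfolding VV_def by auto
      have e1: "(w+1-a = w+1-c) = (a = c)" using ab by arith
      have e2: "(w+1-a \<in> {w-m+1..w}) = (a \<in> {1..m})" using ab mw by auto
      have e3: "path_adj (w+1-a) (w+1-c) = path_adj a c" using ab unfolding path_adj_def by arith
      show ?thesis unfolding p q g_def adjL_def hprod_adj_def UR fst_conv snd_conv e1 e2 e3 by blast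
    qed
    have "ZFT VV (hprod_adj path_adj U (cycle_adj h)) (g ` SS) (tp \<circ> g)"
      by (rule ZFT_transfer[OF gV gg ad ZFT_SS SS_sub])
    moreover have "finite VV" unfolding VV_def by simp
    moreover have "g ` SS \<subseteq> VV" using SS_sub gV by auto
    ultimately have "zero_forcing_set VV (hprod_adj path_adj U (cycle_adj h)) (g ` SS)"
      by (intro ZFT_zfs)
    then have "zero_forcing_number VV (hprod_adj path_adj U (cycle_adj h)) \<le> card (g ` SS)"
      by (rule zfn_le)
    also have "card (g ` SS) = card SS"
    proof (rule card_image)
      show "inj_on g SS" by (rule inj_on_inverseI[where g=g]) (use gg SS_sub in auto)
    qed
    finally show ?thesis using card_SS unfolding VV_def hprod_verts_def by simp
  qed
qed

theorem mainTheorem7: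
  fixes w h m :: nat and U :: "nat set"
  assumes "w \<ge> 2" and "h \<ge> 3" and "1 \<le> m" and "m < w"
    and "U = {1..m} \<or> U = {w - m + 1..w}"
  defines "Z \<equiv> zero_forcing_number (hprod_verts {1..w} {1..h})
                  (hprod_adj path_adj U (cycle_adj h))"
  shows "(h \<le> 2 * m \<longrightarrow> Z \<le> h)
       \<and> (2 * m < h \<and> h < 4 * m \<longrightarrow> Z \<le> 2 * m)
       \<and> (h > 4 * m \<longrightarrow> int Z \<le> \<lceil>real h / 2\<rceil>)"
proof (intro conjI impI)
  show "Z \<le> h" unfolding Z_def by (rule col_bound) (use assms in auto)
next
  assume h: "2 * m < h \<and> h < 4 * m"
  have "grid w h m 0" by unfold_locales (use assms h in auto)
  then show "Z \<le> 2*m" unfolding Z_def using grid_bound[OF _ assms(5)] by fastforce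
next
  assume h: "h > 4 * m"
  define q where "q = (h+1) div 2"
  have q1: "2*q \<le> h+1" "h \<le> 2*q" unfolding q_def by presburger+
  have q2: "2*m+1 \<le> q" using q1 h by presburger
  define j where "j = q - 2*m"
  have j1: "2*m+2*j < h" using q1 q2 assms(3) unfolding j_def by linarith
  have j2: "h \<le> 4*m+2*j" using q1 q2 unfolding j_def by linarith
  have "grid w h m j" by unfold_locales (use assms j1 j2 in auto)
  then have Zb: "Z \<le> 2*m + j" unfolding Z_def using grid_bound[OF _ assms(5)] by blast
  then have Z2: "2 * Z \<le> h + 1" using q1 q2 unfolding j_def by linarith
  have "real_of_int (int Z) - 1 < real h / 2" using Z2 by (simp add: field_simps)
  then show "int Z \<le> \<lceil>real h / 2\<rceil>" by (simp add: le_ceiling_iff)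
qed

end
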